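(* Let $\mathcal{H}$ be a Hilbert space of finite or countably infinite dimension, let $\Omega$ be a finite set, and let $\mathcal{I}$ and $\mathcal{J}$ be two instruments on $\Omega$ with $\mathcal{I}_\omega(\mathbb{1})=\mathcal{J}_\omega(\mathbb{1})$ for all $\omega\in\Omega$. For $t\in[0,1]$ let $t\mathcal{I}+(1-t)\mathcal{J}$ be the instrument $\omega\mapsto t\mathcal{I}_\omega+(1-t)\mathcal{J}_\omega$. If $\mathrm{sat}(\mathcal{I})=\mathrm{sat}(\mathcal{J})=1$, then $\mathrm{sat}(t\mathcal{I}+(1-t)\mathcal{J})=1$.
   Context: An instrument on a finite set $\Omega$ (Heisenberg picture) is a family $(\mathcal{I}_\omega)_{\omega\in\Omega}$ of normal completely positive maps on $\mathcal{L}(\mathcal{H})$ with $\sum_\omega\mathcal{I}_\omega(\mathbb{1})=\mathbb{1}$. An observable with finite outcome set is a map $\omega\mapsto\mathsf{A}(\omega)$ into positive operators summing to $\mathbb{1}$. For observables $\mathsf{A},\mathsf{B}$ with finite outcome sets, $\mathsf{A}\preceq\mathsf{B}$ means there is $\kappa:\Omega_\mathsf{A}\times\Omega_\mathsf{B}\to[0,1]$ with $\sum_\omega\kappa(\omega|\omega')=1$ for all $\omega'$ and $\mathsf{A}(\omega)=\sum_{\omega'}\kappa(\omega|\omega')\mathsf{B}(\omega')$; $\mathsf{A}\simeq\mathsf{B}$ means both $\mathsf{A}\preceq\mathsf{B}$ and $\mathsf{B}\preceq\mathsf{A}$. For an instrument $\mathcal{I}$ and $n\in\mathbb{N}$, $\mathsf{A}^\mathcal{I}_n$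 is the observable on $\Omega^n$ with $\mathsf{A}^\mathcal{I}_n(\omega_1,\ldots,\omega_n)=\mathcal{I}_{\omega_1}\circ\cdots\circ\mathcal{I}_{\omega_n}(\mathbb{1})$. The saturation step $\mathrm{sat}(\mathcal{I})$ is the smallest positive integer $n$ with $\mathsf{A}^\mathcal{I}_n\simeq\mathsf{A}^\mathcal{I}_{n+1}$, and $\mathrm{sat}(\mathcal{I})=\infty$ if no such $n$ exists. *)

theory Defs
  imports Complex_Main "HOL-Library.Extended_Nat"
begin

text \<open>Concrete model of a complex Hilbert space of finite or countably infinite
dimension: the space l2(D) of square-summable complex sequences supported on an
index set D, a subset of the naturals (dimension = card D, or aleph_0 if D is infinite).
Bounded operators are represented as functions on all sequences that vanish
outside l2(D) (canonical representatives, so that operator equality is function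
equality).\<close>

type_synonym vec = "nat \<Rightarrow> complex"
type_synonym op = "vec \<Rightarrow> vec"
type_synonym sop = "op \<Rightarrow> op"

definition l2 :: "nat set \<Rightarrow> vec set" where
  "l2 D = {x. (\<forall>i. i \<notin> D \<longrightarrow> x i = 0) \<and> summable (\<lambda>i. (cmod (x i))\<^sup>2)}"

definition vnorm :: "vec \<Rightarrow> real" where
  "vnorm x = sqrt (\<Sum>i. (cmod (x i))\<^sup>2)"

definition l2inner :: "vec \<Rightarrow> vec \<Rightarrow> complex" where
  "l2inner x y = (\<Sum>i. cnj (x i) * y i)"

definition zero_op :: op where
  "zero_op = (\<lambda>x i. 0)"

definition ident :: "nat set \<Rightarrow> op" where
  "ident D = (\<lambda>x. if x \<in> l2 D then x else (\<lambda>i. 0))"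

definition op_add :: "op \<Rightarrow> op \<Rightarrow> op" where
  "op_add A B = (\<lambda>x i. A x i + B x i)"

definition op_cscale :: "complex \<Rightarrow> op \<Rightarrow> op" where
  "op_cscale c A = (\<lambda>x i. c * A x i)"

definition op_scale :: "real \<Rightarrow> op \<Rightarrow> op" where
  "op_scale r A = op_cscale (complex_of_real r) A"

definition op_diff :: "op \<Rightarrow> op \<Rightarrow> op" where
  "op_diff A B = (\<lambda>x i. A x i - B x i)"

definition op_sum :: "('a \<Rightarrow> op) \<Rightarrow> 'a set \<Rightarrow> op" where
  "op_sum f S = (\<lambda>x i. \<Sum>a\<in>S. f a x i)"

definition bop :: "nat set \<Rightarrow> op set" where
  "bop D = {A. (\<forall>x\<in>l2 D. A x \<in> l2 D)
             \<and> (\<forall>x\<in>l2 D. \<forall>y\<in>l2 D. \<forall>c. A (\<lambda>i. c * x i + y i) = (\<lambda>i. c * A x i + A y i))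
             \<and> (\<exists>K. \<forall>x\<in>l2 D. vnorm (A x) \<le> K * vnorm x)
             \<and> (\<forall>x. x \<notin> l2 D \<longrightarrow> A x = (\<lambda>i. 0))}"

definition nonneg_complex :: "complex \<Rightarrow> bool" where
  "nonneg_complex z \<longleftrightarrow> Im z = 0 \<and> 0 \<le> Re z"

definition pos_op :: "nat set \<Rightarrow> op \<Rightarrow> bool" where
  "pos_op D A \<longleftrightarrow> A \<in> bop D \<and> (\<forall>x\<in>l2 D. nonneg_complex (l2inner x (A x)))"

text \<open>Positivity of an n x n block operator matrix (an element of M_n(L(H)) = L(H^n)).\<close>
definition block_pos :: "nat set \<Rightarrow> nat \<Rightarrow> (nat \<Rightarrow> nat \<Rightarrow> op) \<Rightarrow> bool" where
  "block_pos D n M \<longleftrightarrow> (\<forall>xs :: nat \<Rightarrow> vec. (\<forall>i<n. xs i \<in> l2 D) \<longrightarrow>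
      nonneg_complex (\<Sum>i<n. \<Sum>j<n. l2inner (xs i) (M i j (xs j))))"

definition linear_sop :: "nat set \<Rightarrow> sop \<Rightarrow> bool" where
  "linear_sop D \<Phi> \<longleftrightarrow> (\<forall>A\<in>bop D. \<Phi> A \<in> bop D)
     \<and> (\<forall>A\<in>bop D. \<forall>B\<in>bop D. \<forall>c. \<Phi> (op_add (op_cscale c A) B) = op_add (op_cscale c (\<Phi> A)) (\<Phi> B))"

text \<open>Complete positivity: id_n \<otimes> \<Phi> (entrywise application on M_n(L(H))) is positive for all n.\<close>
definition completely_positive :: "nat set \<Rightarrow> sop \<Rightarrow> bool" where
  "completely_positive D \<Phi> \<longleftrightarrow> (\<forall>n. \<forall>M. (\<forall>i<n. \<forall>j<n. M i j \<in> bop D) \<and> block_pos D n M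
        \<longrightarrow> block_pos D n (\<lambda>i j. \<Phi> (M i j)))"

definition incr_sup :: "nat set \<Rightarrow> (nat \<Rightarrow> op) \<Rightarrow> op \<Rightarrow> bool" where
  "incr_sup D A B \<longleftrightarrow> (\<forall>k. A k \<in> bop D) \<and> B \<in> bop D
     \<and> (\<forall>k. pos_op D (op_diff (A (Suc k)) (A k)))
     \<and> (\<forall>x\<in>l2 D. (\<lambda>k. l2inner x (A k x)) \<longlonglongrightarrow> l2inner x (B x))"

text \<open>Normality: \<Phi>(sup A_k) = sup \<Phi>(A_k) for increasing bounded sequences
(for separable H this is equivalent to the net formulation).\<close>
definition normal_sop :: "nat set \<Rightarrow> sop \<Rightarrow> bool" where
  "normal_sop D \<Phi> \<longleftrightarrow> (\<forall>A B. incr_sup D A B \<longrightarrow>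
       (\<forall>x\<in>l2 D. (\<lambda>k. l2inner x (\<Phi> (A k) x)) \<longlonglongrightarrow> l2inner x (\<Phi> B x)))"

definition instrument :: "nat set \<Rightarrow> 'w set \<Rightarrow> ('w \<Rightarrow> sop) \<Rightarrow> bool" where
  "instrument D \<Omega> I \<longleftrightarrow> finite \<Omega>
     \<and> (\<forall>\<omega>\<in>\<Omega>. linear_sop D (I \<omega>) \<and> completely_positive D (I \<omega>) \<and> normal_sop D (I \<omega>))
     \<and> op_sum (\<lambda>\<omega>. I \<omega> (ident D)) \<Omega> = ident D"

definition obs_le :: "'a set \<Rightarrow> ('a \<Rightarrow> op) \<Rightarrow> 'b set \<Rightarrow> ('b \<Rightarrow> op) \<Rightarrow> bool" where
  "obs_le \<Omega>A A \<Omega>B B \<longleftrightarrow> (\<exists>\<kappa> :: 'a \<Rightarrow> 'b \<Rightarrow> real.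
      (\<forall>\<omega>\<in>\<Omega>A. \<forall>\<omega>'\<in>\<Omega>B. 0 \<le> \<kappa> \<omega> \<omega>' \<and> \<kappa> \<omega> \<omega>' \<le> 1)
    \<and> (\<forall>\<omega>'\<in>\<Omega>B. (\<Sum>\<omega>\<in>\<Omega>A. \<kappa> \<omega> \<omega>') = 1)
    \<and> (\<forall>\<omega>\<in>\<Omega>A. A \<omega> = op_sum (\<lambda>\<omega>'. op_scale (\<kappa> \<omega> \<omega>') (B \<omega>')) \<Omega>B))"

definition obs_equiv :: "'a set \<Rightarrow> ('a \<Rightarrow> op) \<Rightarrow> 'b set \<Rightarrow> ('b \<Rightarrow> op) \<Rightarrow> bool" where
  "obs_equiv \<Omega>A A \<Omega>B B \<longleftrightarrow> obs_le \<Omega>A A \<Omega>B B \<and> obs_le \<Omega>B B \<Omega>A A"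

definition outcomes :: "'w set \<Rightarrow> nat \<Rightarrow> 'w list set" where
  "outcomes \<Omega> n = {ws. length ws = n \<and> set ws \<subseteq> \<Omega>}"

definition seq_obs :: "nat set \<Rightarrow> ('w \<Rightarrow> sop) \<Rightarrow> 'w list \<Rightarrow> op" where
  "seq_obs D I ws = foldr (\<lambda>\<omega> B. I \<omega> B) ws (ident D)"

definition sat :: "nat set \<Rightarrow> 'w set \<Rightarrow> ('w \<Rightarrow> sop) \<Rightarrow> enat" where
  "sat D \<Omega> I = (if \<exists>n\<ge>1. obs_equiv (outcomes \<Omega> n) (seq_obs D I) (outcomes \<Omega> (Suc n)) (seq_obs D I)
     then enat (LEAST n. n \<ge> 1 \<and> obs_equiv (outcomes \<Omega> n) (seq_obs D I) (outcomes \<Omega> (Suc n)) (seq_obs D I))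
     else \<infinity>)"

definition mix :: "real \<Rightarrow> ('w \<Rightarrow> sop) \<Rightarrow> ('w \<Rightarrow> sop) \<Rightarrow> 'w \<Rightarrow> sop" where
  "mix t I J = (\<lambda>\<omega> A. op_add (op_scale t (I \<omega> A)) (op_scale (1 - t) (J \<omega> A)))"

end

theory Submission imports Defs begin

lemma sq_bound: "(p + q)\<^sup>2 \<le> 2 * p\<^sup>2 + 2 * (q::real)\<^sup>2"
proof -
  have "(p + q)\<^sup>2 = 2 * p\<^sup>2 + 2 * q\<^sup>2 - (p - q)\<^sup>2" by (simp add: power2_eq_square algebra_simps)
  thus ?thesis using zero_le_power2[of "p - q"] by linarith
qed

lemma l2_lin:
  assumes "x \<in> l2 D" "y \<in> l2 D"
  shows "(\<lambda>i. c * x i + y i) \<in> l2 D"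
proof -
  have sx: "summable (\<lambda>i. (cmod (x i))\<^sup>2)" and sy: "summable (\<lambda>i. (cmod (y i))\<^sup>2)"
    using assms by (auto simp: l2_def)
  have b: "(cmod (c * x i + y i))\<^sup>2 \<le> 2 * (cmod c)\<^sup>2 * (cmod (x i))\<^sup>2 + 2 * (cmod (y i))\<^sup>2" for i
  proof -
    have "cmod (c * x i + y i) \<le> cmod c * cmod (x i) + cmod (y i)"
      by (metis norm_mult norm_triangle_ineq)
    hence "(cmod (c * x i + y i))\<^sup>2 \<le> (cmod c * cmod (x i) + cmod (y i))\<^sup>2"
      by (simp add: power_mono)
    also have "\<dots> \<le> 2 * (cmod c)\<^sup>2 * (cmod (x i))\<^sup>2 + 2 * (cmod (y i))\<^sup>2"
      using sq_bound[of "cmod c * cmod (x i)" "cmod (y i)"] by (simp add: power_mult_distrib)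
    finally show ?thesis .
  qed
  have "summable (\<lambda>i. 2 * (cmod c)\<^sup>2 * (cmod (x i))\<^sup>2 + 2 * (cmod (y i))\<^sup>2)"
    using sx sy by (intro summable_add summable_mult) auto
  hence "summable (\<lambda>i. (cmod (c * x i + y i))\<^sup>2)"
    by (rule summable_comparison_test[rotated]) (use b in auto)
  thus ?thesis using assms by (auto simp: l2_def)
qed

lemma vnorm_nonneg: "x \<in> l2 D \<Longrightarrow> 0 \<le> vnorm x" by (simp add: vnorm_def l2_def suminf_nonneg)

lemma vnorm_sq: "summable (\<lambda>i. (cmod (x i))\<^sup>2) \<Longrightarrow> (vnorm x)\<^sup>2 = (\<Sum>i. (cmod (x i))\<^sup>2)"
  unfolding vnorm_def by (simp add: suminf_nonneg)

lemma vnorm_add_sq: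
  assumes "u \<in> l2 D" "v \<in> l2 D"
  shows "(vnorm (\<lambda>i. u i + v i))\<^sup>2 \<le> 2 * (vnorm u)\<^sup>2 + 2 * (vnorm v)\<^sup>2"
proof -
  have su: "summable (\<lambda>i. (cmod (u i))\<^sup>2)" and sv: "summable (\<lambda>i. (cmod (v i))\<^sup>2)"
    using assms by (auto simp: l2_def)
  have suv: "summable (\<lambda>i. (cmod (u i + v i))\<^sup>2)"
    using l2_lin[OF assms, of 1] by (auto simp: l2_def)
  have b: "(cmod (u i + v i))\<^sup>2 \<le> 2 * (cmod (u i))\<^sup>2 + 2 * (cmod (v i))\<^sup>2" for i
  proof -
    have "cmod (u i + v i) \<le> cmod (u i) + cmod (v i)" by (rule norm_triangle_ineq)
    hence "(cmod (u i + v i))\<^sup>2 \<le> (cmod (u i) + cmod (v i))\<^sup>2" by (simp add: power_mono)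
    also have "\<dots> \<le> 2 * (cmod (u i))\<^sup>2 + 2 * (cmod (v i))\<^sup>2"
      by (rule sq_bound)
    finally show ?thesis .
  qed
  have "(\<Sum>i. (cmod (u i + v i))\<^sup>2) \<le> (\<Sum>i. 2 * (cmod (u i))\<^sup>2 + 2 * (cmod (v i))\<^sup>2)"
    by (rule suminf_le) (use b suv su sv in \<open>auto intro: summable_add summable_mult\<close>)
  also have "\<dots> = 2 * (\<Sum>i. (cmod (u i))\<^sup>2) + 2 * (\<Sum>i. (cmod (v i))\<^sup>2)"
    using su sv by (simp add: suminf_add[symmetric] suminf_mult summable_mult)
  finally show ?thesis using vnorm_sq[OF su] vnorm_sq[OF sv] vnorm_sq[OF suv] by simp
qed

lemma zero_bop: "zero_op \<in> bop D"
proof -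
  have z: "(\<lambda>i. 0::complex) \<in> l2 D" by (simp add: l2_def)
  show ?thesis unfolding bop_def zero_op_def using z
    by (auto intro!: exI[of _ 0] simp: vnorm_def)
qed

lemma ident_bop: "ident D \<in> bop D"
  unfolding bop_def ident_def
  by (auto intro!: exI[of _ 1] simp: l2_lin)

lemma add_bop:
  assumes A: "A \<in> bop D" and B: "B \<in> bop D"
  shows "op_add A B \<in> bop D"
proof -
  obtain K1 where K1: "\<forall>x\<in>l2 D. vnorm (A x) \<le> K1 * vnorm x" using A by (auto simp: bop_def)
  obtain K2 where K2: "\<forall>x\<in>l2 D. vnorm (B x) \<le> K2 * vnorm x" using B by (auto simp: bop_def)
  have Al: "A x \<in> l2 D" "B x \<in> l2 D" if "x \<in> l2 D" for x using A B that by (auto simp: bop_def)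
  have bnd: "vnorm (op_add A B x) \<le> sqrt (2 * (K1\<^sup>2 + K2\<^sup>2)) * vnorm x" if x: "x \<in> l2 D" for x
  proof -
    have a: "(vnorm (A x))\<^sup>2 \<le> K1\<^sup>2 * (vnorm x)\<^sup>2"
    proof -
      have "(vnorm (A x))\<^sup>2 \<le> (K1 * vnorm x)\<^sup>2"
        using K1 x vnorm_nonneg[OF Al(1)[OF x]] by (intro power_mono) auto
      thus ?thesis by (simp add: power_mult_distrib)
    qed
    have b: "(vnorm (B x))\<^sup>2 \<le> K2\<^sup>2 * (vnorm x)\<^sup>2"
    proof -
      have "(vnorm (B x))\<^sup>2 \<le> (K2 * vnorm x)\<^sup>2"
        using K2 x vnorm_nonneg[OF Al(2)[OF x]] by (intro power_mono) auto
      thus ?thesis by (simp add: power_mult_distrib)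
    qed
    have "(vnorm (op_add A B x))\<^sup>2 \<le> 2 * (K1\<^sup>2 + K2\<^sup>2) * (vnorm x)\<^sup>2"
      using vnorm_add_sq[OF Al[OF x]] a b unfolding op_add_def by (simp add: algebra_simps)
    hence "sqrt ((vnorm (op_add A B x))\<^sup>2) \<le> sqrt (2 * (K1\<^sup>2 + K2\<^sup>2) * (vnorm x)\<^sup>2)"
      using real_sqrt_le_mono by blast
    thus ?thesis using vnorm_nonneg[OF x] vnorm_nonneg[OF l2_lin[OF Al[OF x], of 1]] by (simp add: real_sqrt_mult op_add_def)
  qed
  have lin: "op_add A B (\<lambda>i. c * x i + y i) = (\<lambda>i. c * op_add A B x i + op_add A B y i)"
    if "x \<in> l2 D" "y \<in> l2 D" for x y c
    using A B that unfolding bop_def op_add_def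
    by (auto simp: fun_eq_iff algebra_simps) 
  show ?thesis unfolding bop_def
  proof (intro CollectI conjI ballI allI impI)
    fix x assume x: "x \<in> l2 D"
    show "op_add A B x \<in> l2 D" using l2_lin[OF Al[OF x], of 1] by (simp add: op_add_def)
  next
    fix x y c assume "x \<in> l2 D" "y \<in> l2 D"
    thus "op_add A B (\<lambda>i. c * x i + y i) = (\<lambda>i. c * op_add A B x i + op_add A B y i)" by (rule lin)
  next
    show "\<exists>K. \<forall>x\<in>l2 D. vnorm (op_add A B x) \<le> K * vnorm x" using bnd by blast
  next
    fix x assume "x \<notin> l2 D"
    thus "op_add A B x = (\<lambda>i. 0)" using A B by (auto simp: bop_def op_add_def)
  qed
qed

lemma lin_add:
  assumes "linear_sop D F" "A \<in> bop D" "B \<in> bop D"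
  shows "F (op_add A B) = op_add (F A) (F B)"
proof -
  have "op_cscale 1 A = A" "op_cscale 1 (F A) = F A" by (auto simp: op_cscale_def)
  thus ?thesis using assms unfolding linear_sop_def by metis
qed

lemma lin_zero:
  assumes "linear_sop D F"
  shows "F zero_op = zero_op"
proof -
  have "op_add (op_cscale (-1) zero_op) zero_op = zero_op" by (auto simp: op_add_def op_cscale_def zero_op_def)
  moreover have "op_add (op_cscale (-1) (F zero_op)) (F zero_op) = zero_op" by (auto simp: op_add_def op_cscale_def zero_op_def)
  ultimately show ?thesis using assms zero_bop unfolding linear_sop_def by metis
qed

lemma lin_sum:
  assumes "linear_sop D F" "finite S" "\<forall>a\<in>S. f a \<in> bop D"
  shows "op_sum f S \<in> bop D \<and> F (op_sum f S) = op_sum (\<lambda>a. F (f a)) S"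
  using assms(2,3)
proof (induction S rule: finite_induct)
  case empty
  have "op_sum f {} = zero_op" "op_sum (\<lambda>a. F (f a)) {} = zero_op"
    by (auto simp: op_sum_def zero_op_def)
  then show ?case using zero_bop lin_zero[OF assms(1)] by simp
next
  case (insert a S)
  have e: "op_sum g (insert a S) = op_add (g a) (op_sum g S)" for g :: "_ \<Rightarrow> op"
    using insert(1,2) by (auto simp: op_sum_def op_add_def fun_eq_iff)
  show ?case using insert lin_add[OF assms(1)] add_bop unfolding e by auto
qed


lemma outcomes1: "outcomes \<Omega> (Suc 0) = (\<lambda>c. [c]) ` \<Omega>"
  by (auto simp: outcomes_def length_Suc_conv)

lemma outcomes2: "outcomes \<Omega> (Suc (Suc 0)) = (\<lambda>(a,b). [a,b]) ` (\<Omega> \<times> \<Omega>)"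
  by (auto simp: outcomes_def length_Suc_conv image_iff)

lemma sat1_equiv:
  assumes "sat D \<Omega> I = 1"
  shows "obs_equiv (outcomes \<Omega> (Suc 0)) (seq_obs D I) (outcomes \<Omega> (Suc (Suc 0))) (seq_obs D I)"
proof -
  let ?P = "\<lambda>n. n \<ge> 1 \<and> obs_equiv (outcomes \<Omega> n) (seq_obs D I) (outcomes \<Omega> (Suc n)) (seq_obs D I)"
  have ex: "\<exists>n. ?P n"
  proof (rule ccontr)
    assume "\<not> (\<exists>n. ?P n)"
    hence "sat D \<Omega> I = \<infinity>" unfolding sat_def by auto
    thus False using assms by simp
  qed
  hence "sat D \<Omega> I = enat (LEAST n. ?P n)" unfolding sat_def by auto
  hence "(LEAST n. ?P n) = 1" using assms by (simp add: one_enat_def)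
  moreover have "?P (LEAST n. ?P n)" using ex by (rule LeastI_ex)
  ultimately show ?thesis by simp
qed

lemma equiv_sat1:
  assumes "obs_equiv (outcomes \<Omega> (Suc 0)) (seq_obs D I) (outcomes \<Omega> (Suc (Suc 0))) (seq_obs D I)"
  shows "sat D \<Omega> I = 1"
proof -
  let ?P = "\<lambda>n. n \<ge> 1 \<and> obs_equiv (outcomes \<Omega> n) (seq_obs D I) (outcomes \<Omega> (Suc n)) (seq_obs D I)"
  have p1: "?P 1" using assms by simp
  hence "(LEAST n. ?P n) = 1" by (intro Least_equality) auto
  thus ?thesis using p1 unfolding sat_def by (auto simp: one_enat_def)
qed

lemma fun_cong2: "f = g \<Longrightarrow> f x y = g x y" by simp

theorem proposition2:
  fixes D :: "nat set" and \<Omega> :: "'w set" and I J :: "'w \<Rightarrow> sop" and t :: real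
  assumes "finite \<Omega>"
    and "instrument D \<Omega> I" and "instrument D \<Omega> J"
    and "\<forall>\<omega>\<in>\<Omega>. I \<omega> (ident D) = J \<omega> (ident D)"
    and "0 \<le> t" and "t \<le> 1"
    and "sat D \<Omega> I = 1" and "sat D \<Omega> J = 1"
  shows "sat D \<Omega> (mix t I J) = 1"
proof -
  define M where "M = mix t I J"
  define E where "E = (\<lambda>c. I c (ident D))"
  define O1 where "O1 = outcomes \<Omega> (Suc 0)"
  define O2 where "O2 = outcomes \<Omega> (Suc (Suc 0))"
  have fin: "finite \<Omega>" by fact
  have fO1: "finite O1" unfolding O1_def outcomes1 using fin by simp
  have fO2: "finite O2" unfolding O2_def outcomes2 using fin by simp
  have JE: "J c (ident D) = E c" if "c \<in> \<Omega>" for c using assms(4) that by (simp add: E_def)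
  have ME: "M c (ident D) = E c" if "c \<in> \<Omega>" for c
    using JE[OF that] unfolding M_def mix_def E_def op_add_def op_scale_def op_cscale_def
    by (auto simp: fun_eq_iff algebra_simps)
  have s1: "seq_obs D K [c] = K c (ident D)" for K and c :: 'w by (simp add: seq_obs_def)
  have s2: "seq_obs D K [a, b] = K a (K b (ident D))" for K and a b :: 'w by (simp add: seq_obs_def)
  have O1e: "\<forall>w\<in>O1. seq_obs D J w = seq_obs D I w \<and> seq_obs D M w = seq_obs D I w"
    unfolding O1_def outcomes1 using JE ME by (auto simp: s1 E_def)
  have linI: "linear_sop D (I c)" and linJ: "linear_sop D (J c)" if "c \<in> \<Omega>" for c
    using assms(2,3) that unfolding instrument_def by auto
  have Ebop: "\<forall>c\<in>\<Omega>. E c \<in> bop D"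
    using linI ident_bop unfolding E_def linear_sop_def by blast
  have sumE: "op_sum E \<Omega> = ident D" using assms(2) unfolding instrument_def E_def by auto
  obtain kI where kI: "(\<forall>\<omega>\<in>O2. \<forall>\<omega>'\<in>O1. 0 \<le> kI \<omega> \<omega>' \<and> kI \<omega> \<omega>' \<le> 1)"
    "(\<forall>\<omega>'\<in>O1. (\<Sum>\<omega>\<in>O2. kI \<omega> \<omega>') = 1)"
    "(\<forall>\<omega>\<in>O2. seq_obs D I \<omega> = op_sum (\<lambda>\<omega>'. op_scale (kI \<omega> \<omega>') (seq_obs D I \<omega>')) O1)"
    using sat1_equiv[OF assms(7)] unfolding obs_equiv_def obs_le_def O1_def O2_def by blast
  obtain kJ where kJ: "(\<forall>\<omega>\<in>O2. \<forall>\<omega>'\<in>O1. 0 \<le> kJ \<omega> \<omega>' \<and> kJ \<omega> \<omega>' \<le> 1)"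
    "(\<forall>\<omega>'\<in>O1. (\<Sum>\<omega>\<in>O2. kJ \<omega> \<omega>') = 1)"
    "(\<forall>\<omega>\<in>O2. seq_obs D J \<omega> = op_sum (\<lambda>\<omega>'. op_scale (kJ \<omega> \<omega>') (seq_obs D J \<omega>')) O1)"
    using sat1_equiv[OF assms(8)] unfolding obs_equiv_def obs_le_def O1_def O2_def by blast
  have mixO2: "seq_obs D M w = (\<lambda>x i. of_real t * seq_obs D I w x i + of_real (1 - t) * seq_obs D J w x i)"
    if wO2: "w \<in> O2" for w
  proof -
    obtain a b where w: "w = [a, b]" "a \<in> \<Omega>" "b \<in> \<Omega>" using wO2 unfolding O2_def outcomes2 by auto
    have "seq_obs D M w = M a (E b)" using w ME by (simp add: s2)
    also have "\<dots> = (\<lambda>x i. of_real t * seq_obs D I w x i + of_real (1 - t) * seq_obs D J w x i)"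
      using w JE unfolding M_def mix_def op_add_def op_scale_def op_cscale_def E_def by (simp add: s2)
    finally show ?thesis .
  qed
  have le1: "obs_le O2 (seq_obs D M) O1 (seq_obs D M)"
    unfolding obs_le_def
  proof (intro exI[of _ "\<lambda>w w'. t * kI w w' + (1 - t) * kJ w w'"] conjI ballI)
    fix w w' assume "w \<in> O2" "w' \<in> O1"
    hence a: "0 \<le> kI w w'" "kI w w' \<le> 1" "0 \<le> kJ w w'" "kJ w w' \<le> 1" using kI kJ by auto
    have "t * kI w w' \<le> t" "(1 - t) * kJ w w' \<le> 1 - t"
      using a assms(5,6) by (simp_all add: mult_left_le)
    thus "t * kI w w' + (1 - t) * kJ w w' \<le> 1" by linarith
    show "0 \<le> t * kI w w' + (1 - t) * kJ w w'" using a assms(5,6) by simp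
  next
    fix w' assume "w' \<in> O1"
    thus "(\<Sum>w\<in>O2. t * kI w w' + (1 - t) * kJ w w') = 1"
      using kI kJ by (simp add: sum.distrib sum_distrib_left[symmetric])
  next
    fix w assume w: "w \<in> O2"
    have "seq_obs D M w x i = op_sum (\<lambda>w'. op_scale (t * kI w w' + (1 - t) * kJ w w') (seq_obs D M w')) O1 x i" for x i
    proof -
      have eI: "seq_obs D I w = op_sum (\<lambda>w'. op_scale (kI w w') (seq_obs D I w')) O1" using kI(3) w by blast
      have eJ: "seq_obs D J w = op_sum (\<lambda>w'. op_scale (kJ w w') (seq_obs D J w')) O1" using kJ(3) w by blast
      have "seq_obs D M w x i = of_real t * (\<Sum>w'\<in>O1. of_real (kI w w') * seq_obs D I w' x i)
           + of_real (1 - t) * (\<Sum>w'\<in>O1. of_real (kJ w w') * seq_obs D J w' x i)"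
      proof -
        have "seq_obs D M w x i = of_real t * seq_obs D I w x i + of_real (1 - t) * seq_obs D J w x i"
          using mixO2[OF w] by (rule fun_cong2)
        also have "seq_obs D I w x i = (\<Sum>w'\<in>O1. of_real (kI w w') * seq_obs D I w' x i)"
          by (subst eI) (simp only: op_sum_def op_scale_def op_cscale_def)
        also have "seq_obs D J w x i = (\<Sum>w'\<in>O1. of_real (kJ w w') * seq_obs D J w' x i)"
          by (subst eJ) (simp only: op_sum_def op_scale_def op_cscale_def)
        finally show ?thesis .
      qed
      also have "\<dots> = (\<Sum>w'\<in>O1. of_real t * (of_real (kI w w') * seq_obs D I w' x i) + of_real (1 - t) * (of_real (kJ w w') * seq_obs D I w' x i))"
        using O1e by (simp add: sum.distrib sum_distrib_left cong: sum.cong)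
      also have "\<dots> = (\<Sum>w'\<in>O1. of_real (t * kI w w' + (1 - t) * kJ w w') * seq_obs D I w' x i)"
        by (rule sum.cong) (simp_all add: algebra_simps)
      also have "\<dots> = op_sum (\<lambda>w'. op_scale (t * kI w w' + (1 - t) * kJ w w') (seq_obs D M w')) O1 x i"
        using O1e by (simp add: op_sum_def op_scale_def op_cscale_def)
      finally show ?thesis .
    qed
    thus "seq_obs D M w = op_sum (\<lambda>w'. op_scale (t * kI w w' + (1 - t) * kJ w w') (seq_obs D M w')) O1"
      by (simp add: fun_eq_iff)
  qed
  have rowI: "op_sum (\<lambda>c. I a (E c)) \<Omega> = E a" if "a \<in> \<Omega>" for a
    using lin_sum[OF linI[OF that] fin Ebop] sumE by (simp add: E_def)
  have rowJ: "op_sum (\<lambda>c. J a (E c)) \<Omega> = E a" if "a \<in> \<Omega>" for a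
    using lin_sum[OF linJ[OF that] fin Ebop] sumE JE[OF that] by simp
  have le2: "obs_le O1 (seq_obs D M) O2 (seq_obs D M)"
    unfolding obs_le_def
  proof (intro exI[of _ "\<lambda>w w'. if w = [hd w'] then 1 else 0"] conjI ballI)
    fix w w' show "0 \<le> (if w = [hd w'] then 1 else (0::real))" "(if w = [hd w'] then 1 else (0::real)) \<le> 1"
      by auto
  next
    fix w' assume "w' \<in> O2"
    hence "[hd w'] \<in> O1" unfolding O1_def O2_def outcomes1 outcomes2 by auto
    thus "(\<Sum>w\<in>O1. if w = [hd w'] then 1 else (0::real)) = 1"
      using fO1 by (simp add: sum.delta)
  next
    fix w assume "w \<in> O1"
    then obtain a where w: "w = [a]" "a \<in> \<Omega>" unfolding O1_def outcomes1 by auto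
    have inj: "inj_on (\<lambda>(a, b). [a, b]) (\<Omega> \<times> \<Omega>)" by (auto simp: inj_on_def)
    have "op_sum (\<lambda>w'. op_scale (if w = [hd w'] then 1 else 0) (seq_obs D M w')) O2 x i = seq_obs D M w x i" for x i
    proof -
      have "op_sum (\<lambda>w'. op_scale (if w = [hd w'] then 1 else 0) (seq_obs D M w')) O2 x i
          = (\<Sum>p\<in>\<Omega> \<times> \<Omega>. (if a = fst p then M a (E (snd p)) x i else 0))"
      proof -
        have O2e: "O2 = (\<lambda>p. [fst p, snd p]) ` (\<Omega> \<times> \<Omega>)"
          unfolding O2_def outcomes2 by (auto simp: image_iff)
        have inj2: "inj_on (\<lambda>p. [fst p, snd p]) (\<Omega> \<times> \<Omega>)" by (auto simp: inj_on_def prod_eq_iff)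
        show ?thesis unfolding O2e op_sum_def op_scale_def op_cscale_def sum.reindex[OF inj2] o_def
          by (rule sum.cong) (use w ME in \<open>auto simp: s2\<close>)
      qed
      also have "\<dots> = (\<Sum>b\<in>\<Omega>. \<Sum>c\<in>\<Omega>. (if a = b then M a (E c) x i else 0))"
        by (simp add: sum.cartesian_product case_prod_beta)
      also have "\<dots> = (\<Sum>c\<in>\<Omega>. M a (E c) x i)"
      proof -
        have "(\<lambda>b. \<Sum>c\<in>\<Omega>. (if a = b then M a (E c) x i else 0)) = (\<lambda>b. if a = b then (\<Sum>c\<in>\<Omega>. M a (E c) x i) else 0)" (is "?lhs = ?rhs")
          by auto
        show ?thesis unfolding \<open>?lhs = ?rhs\<close> using w fin by (simp add: sum.delta sum.delta')
      qed
      also have "\<dots> = of_real t * op_sum (\<lambda>c. I a (E c)) \<Omega> x i + of_real (1 - t) * op_sum (\<lambda>c. J a (E c)) \<Omega> x i"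
        unfolding M_def mix_def op_add_def op_scale_def op_cscale_def op_sum_def
        by (simp add: sum.distrib sum_distrib_left)
      also have "\<dots> = E a x i" using rowI[OF w(2)] rowJ[OF w(2)] by (simp add: algebra_simps)
      also have "\<dots> = seq_obs D M w x i" using w ME by (simp add: s1)
      finally show ?thesis .
    qed
    thus "seq_obs D M w = op_sum (\<lambda>w'. op_scale (if w = [hd w'] then 1 else 0) (seq_obs D M w')) O2"
      by (simp add: fun_eq_iff)
  qed
  have "obs_equiv O1 (seq_obs D M) O2 (seq_obs D M)" using le1 le2 by (simp add: obs_equiv_def)
  thus ?thesis unfolding M_def O1_def O2_def by (rule equiv_sat1)
qed

end
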